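(* Let $\mathcal C$ be a $(2,1)$-category and let $\mathcal A,\mathcal B$ be arrowy $2$-subcategories of $\mathcal C$ such that for every morphism $f\colon X\to Y$ of $\mathcal C$ there exist a morphism $i\colon X\to Z$ of $\mathcal A$, a morphism $p\colon Z\to Y$ of $\mathcal B$ and a $2$-cell $pi\Rightarrow f$ (i.e. $\mathrm{Comp}_{\mathcal A,\mathcal B}(f)\neq\emptyset$). Then for every $n\ge 0$ and every $n$-simplex $\sigma$ of $\mathcal C$, the set $\mathrm{Comp}_{\mathcal A,\mathcal B}(\sigma)$ is nonempty.
   Context: A $(2,1)$-category is a $2$-category all of whose $2$-cells are invertible; an arrowy $2$-subcategory has all objects and is full on $2$-cells between its morphisms (inclusion on hom-categories fully faithful and injective on objects). $[n]=\{0,\dots,n\}$ with its usual order, viewed as a category. An $n$-simplex of $\mathcal C$ is a strictly unital pseudofunctor $\sigma\colon[n]\to\mathcal C$. Let $\Delta_n=\{(k,l)\in[n]\times[n]\mid k\ge l\}$ with the product partial order, viewed as a category, and let $[n]\to\Delta_n$ be the diagonal embedding $l\mapsto(l,l)$. The set $\mathrm{Comp}_{\mathcal A,\mathcal B}(\sigma)$ of compactifications of $\sigma$ is the set of strictly unital pseudofunctors $F\colon\Delta_n\to\mathcal C$ whose composite with the diagonal embedding equals $\sigma$, such that $F((k,l)\to(k',l))$ is a morphism of $\mathcal A$ and $F((k',l)\to(k',l'))$ is a morphism of $\mathcal B$ for all relevant $k\le k'$, $l\le l'$. For $n=1$ and $\sigma=f$ this amounts to a factorization $X\xrightarrow{i}Z\xrightarrow{p}Y$,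 $i\in\mathcal A$, $p\in\mathcal B$, with an invertible $2$-cell $pi\Rightarrow f$. *)

theory Defs
  imports Main
begin

text \<open>Composition is written in applicative order:
  cmp g f is g after f; vcmp b a is b after a (vertical); hcmp b a is b after a
  (horizontal).\<close>

record ('o, 'm, 'c) twocat =
  obj  :: "'o set"
  arr  :: "'m set"
  cel  :: "'c set"
  src  :: "'m \<Rightarrow> 'o"
  trg  :: "'m \<Rightarrow> 'o"
  ide  :: "'o \<Rightarrow> 'm"
  cmp  :: "'m \<Rightarrow> 'm \<Rightarrow> 'm"
  src2 :: "'c \<Rightarrow> 'm"
  trg2 :: "'c \<Rightarrow> 'm"
  ide2 :: "'m \<Rightarrow> 'c"
  vcmp :: "'c \<Rightarrow> 'c \<Rightarrow> 'c"
  hcmp :: "'c \<Rightarrow> 'c \<Rightarrow> 'c"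

definition two_category :: "('o, 'm, 'c, 'x) twocat_scheme \<Rightarrow> bool" where
  "two_category C \<longleftrightarrow>
     \<comment> \<open>underlying 1-category\<close>
     (\<forall>f\<in>arr C. src C f \<in> obj C \<and> trg C f \<in> obj C) \<and>
     (\<forall>X\<in>obj C. ide C X \<in> arr C \<and> src C (ide C X) = X \<and> trg C (ide C X) = X) \<and>
     (\<forall>f\<in>arr C. \<forall>g\<in>arr C. src C g = trg C f \<longrightarrow>
        cmp C g f \<in> arr C \<and> src C (cmp C g f) = src C f \<and> trg C (cmp C g f) = trg C g) \<and>
     (\<forall>f\<in>arr C. cmp C f (ide C (src C f)) = f \<and> cmp C (ide C (trg C f)) f = f) \<and>
     (\<forall>f\<in>arr C. \<forall>g\<in>arr C. \<forall>h\<in>arr C. src C g = trg C f \<and> src C h = trg C g \<longrightarrow>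
        cmp C h (cmp C g f) = cmp C (cmp C h g) f) \<and>
     \<comment> \<open>2-cells between parallel 1-cells, vertical composition\<close>
     (\<forall>a\<in>cel C. src2 C a \<in> arr C \<and> trg2 C a \<in> arr C \<and>
        src C (src2 C a) = src C (trg2 C a) \<and> trg C (src2 C a) = trg C (trg2 C a)) \<and>
     (\<forall>f\<in>arr C. ide2 C f \<in> cel C \<and> src2 C (ide2 C f) = f \<and> trg2 C (ide2 C f) = f) \<and>
     (\<forall>a\<in>cel C. \<forall>b\<in>cel C. src2 C b = trg2 C a \<longrightarrow>
        vcmp C b a \<in> cel C \<and> src2 C (vcmp C b a) = src2 C a \<and> trg2 C (vcmp C b a) = trg2 C b) \<and>
     (\<forall>a\<in>cel C. vcmp C a (ide2 C (src2 C a)) = a \<and> vcmp C (ide2 C (trg2 C a)) a = a) \<and>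
     (\<forall>a\<in>cel C. \<forall>b\<in>cel C. \<forall>c\<in>cel C. src2 C b = trg2 C a \<and> src2 C c = trg2 C b \<longrightarrow>
        vcmp C c (vcmp C b a) = vcmp C (vcmp C c b) a) \<and>
     \<comment> \<open>horizontal composition\<close>
     (\<forall>a\<in>cel C. \<forall>b\<in>cel C. src C (src2 C b) = trg C (src2 C a) \<longrightarrow>
        hcmp C b a \<in> cel C \<and> src2 C (hcmp C b a) = cmp C (src2 C b) (src2 C a) \<and>
        trg2 C (hcmp C b a) = cmp C (trg2 C b) (trg2 C a)) \<and>
     (\<forall>f\<in>arr C. \<forall>g\<in>arr C. src C g = trg C f \<longrightarrow>
        hcmp C (ide2 C g) (ide2 C f) = ide2 C (cmp C g f)) \<and>
     (\<forall>a\<in>cel C. hcmp C a (ide2 C (ide C (src C (src2 C a)))) = a \<and>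
        hcmp C (ide2 C (ide C (trg C (src2 C a)))) a = a) \<and>
     (\<forall>a\<in>cel C. \<forall>b\<in>cel C. \<forall>c\<in>cel C.
        src C (src2 C b) = trg C (src2 C a) \<and> src C (src2 C c) = trg C (src2 C b) \<longrightarrow>
        hcmp C c (hcmp C b a) = hcmp C (hcmp C c b) a) \<and>
     \<comment> \<open>interchange law\<close>
     (\<forall>a\<in>cel C. \<forall>a'\<in>cel C. \<forall>b\<in>cel C. \<forall>b'\<in>cel C.
        src2 C a' = trg2 C a \<and> src2 C b' = trg2 C b \<and> src C (src2 C b) = trg C (src2 C a) \<longrightarrow>
        hcmp C (vcmp C b' b) (vcmp C a' a) = vcmp C (hcmp C b' a') (hcmp C b a))"

definition iso2 :: "('o, 'm, 'c, 'x) twocat_scheme \<Rightarrow> 'c \<Rightarrow> bool" where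
  "iso2 C a \<longleftrightarrow> a \<in> cel C \<and>
     (\<exists>b\<in>cel C. src2 C b = trg2 C a \<and> trg2 C b = src2 C a \<and>
        vcmp C b a = ide2 C (src2 C a) \<and> vcmp C a b = ide2 C (trg2 C a))"

definition two_one_category :: "('o, 'm, 'c, 'x) twocat_scheme \<Rightarrow> bool" where
  "two_one_category C \<longleftrightarrow> two_category C \<and> (\<forall>a\<in>cel C. iso2 C a)"

text \<open>An arrowy 2-subcategory (all objects, full on 2-cells) is determined by its set
  of 1-cells, which must contain all identities and be closed under composition.\<close>
definition arrowy_sub :: "('o, 'm, 'c, 'x) twocat_scheme \<Rightarrow> 'm set \<Rightarrow> bool" where
  "arrowy_sub C A \<longleftrightarrow> A \<subseteq> arr C \<and> (\<forall>X\<in>obj C. ide C X \<in> A) \<and>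
     (\<forall>f\<in>A. \<forall>g\<in>A. src C g = trg C f \<longrightarrow> cmp C g f \<in> A)"

text \<open>Data: object map F0, 1-cell map F1 (F1 a b is the image of a \<le> b), and the
  compositor F2 a b c : F1 b c \<circ> F1 a b \<Rightarrow> F1 a c, an invertible 2-cell.\<close>
definition su_pseudofunctor ::
  "('o, 'm, 'c, 'x) twocat_scheme \<Rightarrow> 'i set \<Rightarrow> ('i \<Rightarrow> 'i \<Rightarrow> bool) \<Rightarrow>
   ('i \<Rightarrow> 'o) \<Rightarrow> ('i \<Rightarrow> 'i \<Rightarrow> 'm) \<Rightarrow> ('i \<Rightarrow> 'i \<Rightarrow> 'i \<Rightarrow> 'c) \<Rightarrow> bool" where
  "su_pseudofunctor C I le F0 F1 F2 \<longleftrightarrow>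
     (\<forall>a\<in>I. F0 a \<in> obj C) \<and>
     (\<forall>a\<in>I. \<forall>b\<in>I. le a b \<longrightarrow>
        F1 a b \<in> arr C \<and> src C (F1 a b) = F0 a \<and> trg C (F1 a b) = F0 b) \<and>
     (\<forall>a\<in>I. F1 a a = ide C (F0 a)) \<and>
     (\<forall>a\<in>I. \<forall>b\<in>I. \<forall>c\<in>I. le a b \<and> le b c \<longrightarrow>
        iso2 C (F2 a b c) \<and> src2 C (F2 a b c) = cmp C (F1 b c) (F1 a b) \<and>
        trg2 C (F2 a b c) = F1 a c) \<and>
     (\<forall>a\<in>I. \<forall>b\<in>I. le a b \<longrightarrow>
        F2 a a b = ide2 C (F1 a b) \<and> F2 a b b = ide2 C (F1 a b)) \<and>
     (\<forall>a\<in>I. \<forall>b\<in>I. \<forall>c\<in>I. \<forall>d\<in>I. le a b \<and> le b c \<and> le c d \<longrightarrow>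
        vcmp C (F2 a c d) (hcmp C (ide2 C (F1 c d)) (F2 a b c)) =
        vcmp C (F2 a b d) (hcmp C (F2 b c d) (ide2 C (F1 a b))))"

definition simplex ::
  "('o, 'm, 'c, 'x) twocat_scheme \<Rightarrow> nat \<Rightarrow>
   (nat \<Rightarrow> 'o) \<Rightarrow> (nat \<Rightarrow> nat \<Rightarrow> 'm) \<Rightarrow> (nat \<Rightarrow> nat \<Rightarrow> nat \<Rightarrow> 'c) \<Rightarrow> bool" where
  "simplex C n s0 s1 s2 \<longleftrightarrow> su_pseudofunctor C {0..n} (\<le>) s0 s1 s2"

definition Delta :: "nat \<Rightarrow> (nat \<times> nat) set" where
  "Delta n = {(k, l). k \<le> n \<and> l \<le> k}"

definition Delta_le :: "nat \<times> nat \<Rightarrow> nat \<times> nat \<Rightarrow> bool" where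
  "Delta_le = (\<lambda>(k, l) (k', l'). k \<le> k' \<and> l \<le> l')"

text \<open>Compactifications of the n-simplex (s0, s1, s2): strictly unital pseudofunctors
  on Delta n restricting to the simplex along the diagonal, with horizontal arrows in A
  and vertical arrows in B.\<close>
definition Comp ::
  "('o, 'm, 'c, 'x) twocat_scheme \<Rightarrow> 'm set \<Rightarrow> 'm set \<Rightarrow> nat \<Rightarrow>
   (nat \<Rightarrow> 'o) \<Rightarrow> (nat \<Rightarrow> nat \<Rightarrow> 'm) \<Rightarrow> (nat \<Rightarrow> nat \<Rightarrow> nat \<Rightarrow> 'c) \<Rightarrow>
   ((nat \<times> nat \<Rightarrow> 'o) \<times> (nat \<times> nat \<Rightarrow> nat \<times> nat \<Rightarrow> 'm) \<times>
    (nat \<times> nat \<Rightarrow> nat \<times> nat \<Rightarrow> nat \<times> nat \<Rightarrow> 'c)) set" where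
  "Comp C A B n s0 s1 s2 = {(F0, F1, F2).
     su_pseudofunctor C (Delta n) Delta_le F0 F1 F2 \<and>
     (\<forall>l\<le>n. F0 (l, l) = s0 l) \<and>
     (\<forall>l l'. l \<le> l' \<and> l' \<le> n \<longrightarrow> F1 (l, l) (l', l') = s1 l l') \<and>
     (\<forall>l l' l''. l \<le> l' \<and> l' \<le> l'' \<and> l'' \<le> n \<longrightarrow>
        F2 (l, l) (l', l') (l'', l'') = s2 l l' l'') \<and>
     (\<forall>k k' l. l \<le> k \<and> k \<le> k' \<and> k' \<le> n \<longrightarrow> F1 (k, l) (k', l) \<in> A) \<and>
     (\<forall>k' l l'. l \<le> l' \<and> l' \<le> k' \<and> k' \<le> n \<longrightarrow> F1 (k', l) (k', l') \<in> B)}"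

end

theory Submission
  imports Defs
begin


locale TOC =
  fixes C :: "('o,'m,'c) twocat"
  assumes toc: "two_one_category C"
begin

lemma tc: "two_category C" using toc unfolding two_one_category_def by blast
lemmas T = tc[unfolded two_category_def]
lemmas T1 = T[THEN conjunct1]
lemmas T2 = T[THEN conjunct2, THEN conjunct1]
lemmas T3 = T[THEN conjunct2, THEN conjunct2, THEN conjunct1]
lemmas T4 = T[THEN conjunct2, THEN conjunct2, THEN conjunct2, THEN conjunct1]
lemmas T5 = T[THEN conjunct2, THEN conjunct2, THEN conjunct2, THEN conjunct2, THEN conjunct1]
lemmas T6 = T[THEN conjunct2, THEN conjunct2, THEN conjunct2, THEN conjunct2, THEN conjunct2, THEN conjunct1]
lemmas T7 = T[THEN conjunct2, THEN conjunct2, THEN conjunct2, THEN conjunct2, THEN conjunct2, THEN conjunct2, THEN conjunct1]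
lemmas T8 = T[THEN conjunct2, THEN conjunct2, THEN conjunct2, THEN conjunct2, THEN conjunct2, THEN conjunct2, THEN conjunct2, THEN conjunct1]
lemmas T9 = T[THEN conjunct2, THEN conjunct2, THEN conjunct2, THEN conjunct2, THEN conjunct2, THEN conjunct2, THEN conjunct2, THEN conjunct2, THEN conjunct1]
lemmas T10 = T[THEN conjunct2, THEN conjunct2, THEN conjunct2, THEN conjunct2, THEN conjunct2, THEN conjunct2, THEN conjunct2, THEN conjunct2, THEN conjunct2, THEN conjunct1]
lemmas T11 = T[THEN conjunct2, THEN conjunct2, THEN conjunct2, THEN conjunct2, THEN conjunct2, THEN conjunct2, THEN conjunct2, THEN conjunct2, THEN conjunct2, THEN conjunct2, THEN conjunct1]
lemmas T12 = T[THEN conjunct2, THEN conjunct2, THEN conjunct2, THEN conjunct2, THEN conjunct2, THEN conjunct2, THEN conjunct2, THEN conjunct2, THEN conjunct2, THEN conjunct2, THEN conjunct2, THEN conjunct1]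
lemmas T13 = T[THEN conjunct2, THEN conjunct2, THEN conjunct2, THEN conjunct2, THEN conjunct2, THEN conjunct2, THEN conjunct2, THEN conjunct2, THEN conjunct2, THEN conjunct2, THEN conjunct2, THEN conjunct2, THEN conjunct1]
lemmas T14 = T[THEN conjunct2, THEN conjunct2, THEN conjunct2, THEN conjunct2, THEN conjunct2, THEN conjunct2, THEN conjunct2, THEN conjunct2, THEN conjunct2, THEN conjunct2, THEN conjunct2, THEN conjunct2, THEN conjunct2, THEN conjunct1]
lemmas T15 = T[THEN conjunct2, THEN conjunct2, THEN conjunct2, THEN conjunct2, THEN conjunct2, THEN conjunct2, THEN conjunct2, THEN conjunct2, THEN conjunct2, THEN conjunct2, THEN conjunct2, THEN conjunct2, THEN conjunct2, THEN conjunct2]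

lemma arr_src[simp]: "f \<in> arr C \<Longrightarrow> src C f \<in> obj C"
  using T1 by (simp; metis)
lemma arr_trg[simp]: "f \<in> arr C \<Longrightarrow> trg C f \<in> obj C"
  using T1 by (simp; metis)
lemma ide_arr[simp]: "X \<in> obj C \<Longrightarrow> ide C X \<in> arr C"
  using T2 by (simp; metis)
lemma ide_src[simp]: "X \<in> obj C \<Longrightarrow> src C (ide C X) = X"
  using T2 by (simp; metis)
lemma ide_trg[simp]: "X \<in> obj C \<Longrightarrow> trg C (ide C X) = X"
  using T2 by (simp; metis)
lemma cmp_arr[simp]: "f \<in> arr C \<Longrightarrow> g \<in> arr C \<Longrightarrow> src C g = trg C f \<Longrightarrow> cmp C g f \<in> arr C"
  using T3 by (simp; metis)
lemma cmp_src[simp]: "f \<in> arr C \<Longrightarrow> g \<in> arr C \<Longrightarrow> src C g = trg C f \<Longrightarrow> src C (cmp C g f) = src C f"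
  using T3 by (simp; metis)
lemma cmp_trg[simp]: "f \<in> arr C \<Longrightarrow> g \<in> arr C \<Longrightarrow> src C g = trg C f \<Longrightarrow> trg C (cmp C g f) = trg C g"
  using T3 by (simp; metis)
lemma cmp_ide_r[simp]: "f \<in> arr C \<Longrightarrow> X = src C f \<Longrightarrow> cmp C f (ide C X) = f"
  using T4 by (simp; metis)
lemma cmp_ide_l[simp]: "f \<in> arr C \<Longrightarrow> X = trg C f \<Longrightarrow> cmp C (ide C X) f = f"
  using T4 by (simp; metis)
lemma cmp_assoc[simp]: "f \<in> arr C \<Longrightarrow> g \<in> arr C \<Longrightarrow> h \<in> arr C \<Longrightarrow> src C g = trg C f \<Longrightarrow> src C h = trg C g \<Longrightarrow>
   cmp C (cmp C h g) f = cmp C h (cmp C g f)"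
  using T5 by (simp; metis)

lemma cel_src2[simp]: "a \<in> cel C \<Longrightarrow> src2 C a \<in> arr C"
  using T6 by (simp; metis)
lemma cel_trg2[simp]: "a \<in> cel C \<Longrightarrow> trg2 C a \<in> arr C"
  using T6 by (simp; metis)
lemma cel_src_trg2[simp]: "a \<in> cel C \<Longrightarrow> src C (trg2 C a) = src C (src2 C a)"
  using T6 by (simp; metis)
lemma cel_trg_trg2[simp]: "a \<in> cel C \<Longrightarrow> trg C (trg2 C a) = trg C (src2 C a)"
  using T6 by (simp; metis)
lemma ide2_cel[simp]: "f \<in> arr C \<Longrightarrow> ide2 C f \<in> cel C"
  using T7 by (simp; metis)
lemma ide2_src2[simp]: "f \<in> arr C \<Longrightarrow> src2 C (ide2 C f) = f"
  using T7 by (simp; metis)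
lemma ide2_trg2[simp]: "f \<in> arr C \<Longrightarrow> trg2 C (ide2 C f) = f"
  using T7 by (simp; metis)
lemma vcmp_cel[simp]: "a \<in> cel C \<Longrightarrow> b \<in> cel C \<Longrightarrow> src2 C b = trg2 C a \<Longrightarrow> vcmp C b a \<in> cel C"
  using T8 by (simp; metis)
lemma vcmp_src2[simp]: "a \<in> cel C \<Longrightarrow> b \<in> cel C \<Longrightarrow> src2 C b = trg2 C a \<Longrightarrow> src2 C (vcmp C b a) = src2 C a"
  using T8 by (simp; metis)
lemma vcmp_trg2[simp]: "a \<in> cel C \<Longrightarrow> b \<in> cel C \<Longrightarrow> src2 C b = trg2 C a \<Longrightarrow> trg2 C (vcmp C b a) = trg2 C b"
  using T8 by (simp; metis)
lemma vcmp_ide_r[simp]: "a \<in> cel C \<Longrightarrow> f = src2 C a \<Longrightarrow> vcmp C a (ide2 C f) = a"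
  using T9 by (simp; metis)
lemma vcmp_ide_l[simp]: "a \<in> cel C \<Longrightarrow> f = trg2 C a \<Longrightarrow> vcmp C (ide2 C f) a = a"
  using T9 by (simp; metis)
lemma vcmp_assoc: "a \<in> cel C \<Longrightarrow> b \<in> cel C \<Longrightarrow> c \<in> cel C \<Longrightarrow> src2 C b = trg2 C a \<Longrightarrow> src2 C c = trg2 C b \<Longrightarrow>
   vcmp C (vcmp C c b) a = vcmp C c (vcmp C b a)"
  using T10 by (simp; metis)
lemma hcmp_cel[simp]: "a \<in> cel C \<Longrightarrow> b \<in> cel C \<Longrightarrow> src C (src2 C b) = trg C (src2 C a) \<Longrightarrow> hcmp C b a \<in> cel C"
  using T11 by (simp; metis)
lemma hcmp_src2[simp]: "a \<in> cel C \<Longrightarrow> b \<in> cel C \<Longrightarrow> src C (src2 C b) = trg C (src2 C a) \<Longrightarrow>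
    src2 C (hcmp C b a) = cmp C (src2 C b) (src2 C a)"
  using T11 by (simp; metis)
lemma hcmp_trg2[simp]: "a \<in> cel C \<Longrightarrow> b \<in> cel C \<Longrightarrow> src C (src2 C b) = trg C (src2 C a) \<Longrightarrow>
    trg2 C (hcmp C b a) = cmp C (trg2 C b) (trg2 C a)"
  using T11 by (simp; metis)
lemma hcmp_ide2[simp]: "f \<in> arr C \<Longrightarrow> g \<in> arr C \<Longrightarrow> src C g = trg C f \<Longrightarrow>
        hcmp C (ide2 C g) (ide2 C f) = ide2 C (cmp C g f)"
  using T12 by (simp; metis)
lemma hcmp_unit_r[simp]: "a \<in> cel C \<Longrightarrow> X = src C (src2 C a) \<Longrightarrow> hcmp C a (ide2 C (ide C X)) = a"
  using T13 by (simp; metis)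
lemma hcmp_unit_l[simp]: "a \<in> cel C \<Longrightarrow> X = trg C (src2 C a) \<Longrightarrow> hcmp C (ide2 C (ide C X)) a = a"
  using T13 by (simp; metis)
lemma hcmp_assoc: "a \<in> cel C \<Longrightarrow> b \<in> cel C \<Longrightarrow> c \<in> cel C \<Longrightarrow>
   src C (src2 C b) = trg C (src2 C a) \<Longrightarrow> src C (src2 C c) = trg C (src2 C b) \<Longrightarrow>
   hcmp C (hcmp C c b) a = hcmp C c (hcmp C b a)"
  using T14 by (simp; metis)
lemma interchange: "a \<in> cel C \<Longrightarrow> a' \<in> cel C \<Longrightarrow> b \<in> cel C \<Longrightarrow> b' \<in> cel C \<Longrightarrow>
   src2 C a' = trg2 C a \<Longrightarrow> src2 C b' = trg2 C b \<Longrightarrow> src C (src2 C b) = trg C (src2 C a) \<Longrightarrow>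
   vcmp C (hcmp C b' a') (hcmp C b a) = hcmp C (vcmp C b' b) (vcmp C a' a)"
  using T15 by (simp; metis)

lemma cel_iso: "a \<in> cel C \<Longrightarrow> iso2 C a"
  using toc unfolding two_one_category_def by blast


lemma W1: "a \<in> cel C \<Longrightarrow> b \<in> cel C \<Longrightarrow> src2 C b = trg2 C a \<Longrightarrow> h \<in> arr C \<Longrightarrow> src C h = trg C (src2 C a) \<Longrightarrow>
  hcmp C (ide2 C h) (vcmp C b a) = vcmp C (hcmp C (ide2 C h) b) (hcmp C (ide2 C h) a)"
  by (subst interchange) auto
lemma W2: "a \<in> cel C \<Longrightarrow> b \<in> cel C \<Longrightarrow> src2 C b = trg2 C a \<Longrightarrow> h \<in> arr C \<Longrightarrow> trg C h = src C (src2 C a) \<Longrightarrow>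
  hcmp C (vcmp C b a) (ide2 C h) = vcmp C (hcmp C b (ide2 C h)) (hcmp C a (ide2 C h))"
  by (subst interchange) auto
lemma X1: "a \<in> cel C \<Longrightarrow> b \<in> cel C \<Longrightarrow> src C (src2 C b) = trg C (src2 C a) \<Longrightarrow>
  hcmp C b a = vcmp C (hcmp C b (ide2 C (trg2 C a))) (hcmp C (ide2 C (src2 C b)) a)"
  by (subst interchange) auto
lemma X2: "a \<in> cel C \<Longrightarrow> b \<in> cel C \<Longrightarrow> src C (src2 C b) = trg C (src2 C a) \<Longrightarrow>
  hcmp C b a = vcmp C (hcmp C (ide2 C (trg2 C b)) a) (hcmp C b (ide2 C (src2 C a)))"
  by (subst interchange) auto

end


context TOC begin

definition hom :: "'m \<Rightarrow> 'o \<Rightarrow> 'o \<Rightarrow> bool" where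
  "hom f X Y \<longleftrightarrow> f \<in> arr C \<and> src C f = X \<and> trg C f = Y"
definition c2 :: "'c \<Rightarrow> 'm \<Rightarrow> 'm \<Rightarrow> bool" where
  "c2 a f g \<longleftrightarrow> a \<in> cel C \<and> src2 C a = f \<and> trg2 C a = g"

lemma case1:
 assumes H: "hom g12 Y1 Y2" "hom g23 Y2 Y3" "hom g13 Y1 Y3" "hom g3m Y3 Ym" "hom g2m Y2 Ym" "hom g1m Y1 Ym" "hom u Ym X"
 "c2 c123 (cmp C g23 g12) g13" "c2 c13m (cmp C g3m g13) g1m" "c2 c12m (cmp C g2m g12) g1m" "c2 c23m (cmp C g3m g23) g2m"
 and E: "vcmp C c13m (hcmp C (ide2 C g3m) c123) = vcmp C c12m (hcmp C c23m (ide2 C g12))"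
 shows "vcmp C (hcmp C (ide2 C u) c13m) (hcmp C (ide2 C (cmp C u g3m)) c123) =
        vcmp C (hcmp C (ide2 C u) c12m) (hcmp C (hcmp C (ide2 C u) c23m) (ide2 C g12))"
proof -
  note [simp] = H[unfolded hom_def c2_def]
  have e1: "ide2 C (cmp C u g3m) = hcmp C (ide2 C u) (ide2 C g3m)" by simp
  have "vcmp C (hcmp C (ide2 C u) c13m) (hcmp C (ide2 C (cmp C u g3m)) c123)
      = hcmp C (ide2 C u) (vcmp C c13m (hcmp C (ide2 C g3m) c123))"
    unfolding e1 by (simp add: hcmp_assoc W1 del: hcmp_ide2)
  also have "\<dots> = hcmp C (ide2 C u) (vcmp C c12m (hcmp C c23m (ide2 C g12)))" using E by simp
  also have "\<dots> = vcmp C (hcmp C (ide2 C u) c12m) (hcmp C (hcmp C (ide2 C u) c23m) (ide2 C g12))"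
    by (simp add: hcmp_assoc W1)
  finally show ?thesis .
qed

lemma case4:
 assumes H: "hom h1 YM Z1" "hom k12 Z1 Z2" "hom k23 Z2 Z3" "hom k13 Z1 Z3" "hom h2 YM Z2" "hom h3 YM Z3" "hom v X YM"
 "c2 d123 (cmp C k23 k12) k13" "c2 dM12 (cmp C k12 h1) h2" "c2 dM23 (cmp C k23 h2) h3" "c2 dM13 (cmp C k13 h1) h3"
 and E: "vcmp C dM23 (hcmp C (ide2 C k23) dM12) = vcmp C dM13 (hcmp C d123 (ide2 C h1))"
 shows "vcmp C (hcmp C dM23 (ide2 C v)) (hcmp C (ide2 C k23) (hcmp C dM12 (ide2 C v))) =
        vcmp C (hcmp C dM13 (ide2 C v)) (hcmp C d123 (ide2 C (cmp C h1 v)))"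
proof -
  note [simp] = H[unfolded hom_def c2_def]
  have e1: "ide2 C (cmp C h1 v) = hcmp C (ide2 C h1) (ide2 C v)" by simp
  have "vcmp C (hcmp C dM23 (ide2 C v)) (hcmp C (ide2 C k23) (hcmp C dM12 (ide2 C v)))
      = hcmp C (vcmp C dM23 (hcmp C (ide2 C k23) dM12)) (ide2 C v)"
    by (simp add: hcmp_assoc[symmetric] W2)
  also have "\<dots> = hcmp C (vcmp C dM13 (hcmp C d123 (ide2 C h1))) (ide2 C v)" using E by simp
  also have "\<dots> = vcmp C (hcmp C dM13 (ide2 C v)) (hcmp C d123 (ide2 C (cmp C h1 v)))"
    unfolding e1 by (simp add: hcmp_assoc[symmetric] W2 del: hcmp_ide2)
  finally show ?thesis .
qed


lemma case2:
 assumes H: "hom g1 Y1 Y2" "hom g2 Y2 Ym" "hom g12 Y1 Ym" "hom e Ym YM" "hom u Ym X" "hom v X YM"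
   "hom h YM Z" "hom f1M Y1 YM" "hom f2M Y2 YM" "hom f1z Y1 Z" "hom f2z Y2 Z"
   "c2 \<beta> (cmp C v u) e" "c2 c12m (cmp C g2 g1) g12" "c2 c1mM (cmp C e g12) f1M" "c2 c2mM (cmp C e g2) f2M"
   "c2 c12M (cmp C f2M g1) f1M" "c2 c1Mz (cmp C h f1M) f1z" "c2 c2Mz (cmp C h f2M) f2z" "c2 c12z (cmp C f2z g1) f1z"
 and E1: "vcmp C c1mM (hcmp C (ide2 C e) c12m) = vcmp C c12M (hcmp C c2mM (ide2 C g1))"
 and E2: "vcmp C c1Mz (hcmp C (ide2 C h) c12M) = vcmp C c12z (hcmp C c2Mz (ide2 C g1))"
 shows "vcmp C (vcmp C c1Mz (vcmp C (hcmp C (ide2 C h) c1mM) (hcmp C (ide2 C h) (hcmp C \<beta> (ide2 C g12)))))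
           (hcmp C (ide2 C (cmp C h v)) (hcmp C (ide2 C u) c12m)) =
        vcmp C c12z (hcmp C (vcmp C c2Mz (vcmp C (hcmp C (ide2 C h) c2mM) (hcmp C (ide2 C h) (hcmp C \<beta> (ide2 C g2))))) (ide2 C g1))"
proof -
  note [simp] = H[unfolded hom_def c2_def]
  have Wa: "hcmp C (ide2 C (cmp C h v)) (hcmp C (ide2 C u) c12m) = hcmp C (ide2 C h) (hcmp C (ide2 C (cmp C v u)) c12m)"
  proof -
    have "ide2 C (cmp C h v) = hcmp C (ide2 C h) (ide2 C v)" by simp
    moreover have "ide2 C (cmp C v u) = hcmp C (ide2 C v) (ide2 C u)" by simp
    ultimately show ?thesis by (simp add: hcmp_assoc del: hcmp_ide2)
  qed
  have b1: "vcmp C (hcmp C \<beta> (ide2 C g12)) (hcmp C (ide2 C (cmp C v u)) c12m) = hcmp C \<beta> c12m"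
    using X1[of c12m \<beta>] by simp
  have b2: "hcmp C \<beta> c12m = vcmp C (hcmp C (ide2 C e) c12m) (hcmp C \<beta> (ide2 C (cmp C g2 g1)))"
    using X2[of c12m \<beta>] by simp
  have b: "vcmp C (hcmp C (ide2 C h) (hcmp C \<beta> (ide2 C g12))) (hcmp C (ide2 C h) (hcmp C (ide2 C (cmp C v u)) c12m))
     = vcmp C (hcmp C (ide2 C h) (hcmp C (ide2 C e) c12m)) (hcmp C (ide2 C h) (hcmp C \<beta> (ide2 C (cmp C g2 g1))))"
  proof -
    have "vcmp C (hcmp C (ide2 C h) (hcmp C \<beta> (ide2 C g12))) (hcmp C (ide2 C h) (hcmp C (ide2 C (cmp C v u)) c12m))
      = hcmp C (ide2 C h) (vcmp C (hcmp C \<beta> (ide2 C g12)) (hcmp C (ide2 C (cmp C v u)) c12m))"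
      by (subst W1) simp_all
    also have "\<dots> = hcmp C (ide2 C h) (vcmp C (hcmp C (ide2 C e) c12m) (hcmp C \<beta> (ide2 C (cmp C g2 g1))))"
      using b1 b2 by simp
    also have "\<dots> = vcmp C (hcmp C (ide2 C h) (hcmp C (ide2 C e) c12m)) (hcmp C (ide2 C h) (hcmp C \<beta> (ide2 C (cmp C g2 g1))))"
      by (subst W1) simp_all
    finally show ?thesis .
  qed
  have c: "vcmp C (hcmp C (ide2 C h) c1mM) (hcmp C (ide2 C h) (hcmp C (ide2 C e) c12m))
     = vcmp C (hcmp C (ide2 C h) c12M) (hcmp C (ide2 C h) (hcmp C c2mM (ide2 C g1)))"
  proof -
    have "vcmp C (hcmp C (ide2 C h) c1mM) (hcmp C (ide2 C h) (hcmp C (ide2 C e) c12m))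
        = hcmp C (ide2 C h) (vcmp C c1mM (hcmp C (ide2 C e) c12m))" by (subst W1) simp_all
    also have "\<dots> = hcmp C (ide2 C h) (vcmp C c12M (hcmp C c2mM (ide2 C g1)))" using E1 by simp
    also have "\<dots> = vcmp C (hcmp C (ide2 C h) c12M) (hcmp C (ide2 C h) (hcmp C c2mM (ide2 C g1)))"
      by (subst W1) simp_all
    finally show ?thesis .
  qed
  let ?N = "vcmp C c12z (vcmp C (hcmp C c2Mz (ide2 C g1)) (vcmp C (hcmp C (ide2 C h) (hcmp C c2mM (ide2 C g1)))
              (hcmp C (ide2 C h) (hcmp C \<beta> (ide2 C (cmp C g2 g1))))))"
  have "vcmp C (vcmp C c1Mz (vcmp C (hcmp C (ide2 C h) c1mM) (hcmp C (ide2 C h) (hcmp C \<beta> (ide2 C g12)))))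
           (hcmp C (ide2 C (cmp C h v)) (hcmp C (ide2 C u) c12m))
     = vcmp C c1Mz (vcmp C (hcmp C (ide2 C h) c1mM) (vcmp C (hcmp C (ide2 C h) (hcmp C \<beta> (ide2 C g12)))
           (hcmp C (ide2 C h) (hcmp C (ide2 C (cmp C v u)) c12m))))"
    unfolding Wa by (simp add: vcmp_assoc)
  also have "\<dots> = vcmp C c1Mz (vcmp C (vcmp C (hcmp C (ide2 C h) c1mM) (hcmp C (ide2 C h) (hcmp C (ide2 C e) c12m)))
                (hcmp C (ide2 C h) (hcmp C \<beta> (ide2 C (cmp C g2 g1)))))"
    unfolding b by (simp add: vcmp_assoc)
  also have "\<dots> = vcmp C (vcmp C c1Mz (hcmp C (ide2 C h) c12M)) (vcmp C (hcmp C (ide2 C h) (hcmp C c2mM (ide2 C g1)))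
                (hcmp C (ide2 C h) (hcmp C \<beta> (ide2 C (cmp C g2 g1)))))"
    unfolding c by (simp add: vcmp_assoc)
  also have "\<dots> = ?N"
    unfolding E2 by (simp add: vcmp_assoc)
  also have "\<dots> = vcmp C c12z (hcmp C (vcmp C c2Mz (vcmp C (hcmp C (ide2 C h) c2mM) (hcmp C (ide2 C h) (hcmp C \<beta> (ide2 C g2))))) (ide2 C g1))"
  proof -
    have r1: "hcmp C (hcmp C (ide2 C h) c2mM) (ide2 C g1) = hcmp C (ide2 C h) (hcmp C c2mM (ide2 C g1))"
      by (simp add: hcmp_assoc)
    have r2: "hcmp C (hcmp C (ide2 C h) (hcmp C \<beta> (ide2 C g2))) (ide2 C g1) = hcmp C (ide2 C h) (hcmp C \<beta> (ide2 C (cmp C g2 g1)))"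
    proof -
      have "ide2 C (cmp C g2 g1) = hcmp C (ide2 C g2) (ide2 C g1)" by simp
      then show ?thesis by (simp add: hcmp_assoc del: hcmp_ide2)
    qed
    show ?thesis by (simp add: W2 r1 r2 del: hcmp_ide2)
  qed
  finally show ?thesis .
qed


lemma case3:
 assumes H: "hom f Y Ym" "hom e Ym YM" "hom u Ym X" "hom v X YM" "hom h1 YM Z1" "hom h2 YM Z2" "hom k Z1 Z2"
   "hom fM Y YM" "hom f1 Y Z1" "hom f2 Y Z2"
   "c2 \<beta> (cmp C v u) e" "c2 cymM (cmp C e f) fM" "c2 cyMz1 (cmp C h1 fM) f1" "c2 cyMz2 (cmp C h2 fM) f2"
   "c2 cM12 (cmp C k h1) h2" "c2 cy12 (cmp C k f1) f2"
 and E: "vcmp C cy12 (hcmp C (ide2 C k) cyMz1) = vcmp C cyMz2 (hcmp C cM12 (ide2 C fM))"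
 shows "vcmp C cy12 (hcmp C (ide2 C k) (vcmp C cyMz1 (vcmp C (hcmp C (ide2 C h1) cymM) (hcmp C (ide2 C h1) (hcmp C \<beta> (ide2 C f)))))) =
        vcmp C (vcmp C cyMz2 (vcmp C (hcmp C (ide2 C h2) cymM) (hcmp C (ide2 C h2) (hcmp C \<beta> (ide2 C f)))))
          (hcmp C (hcmp C cM12 (ide2 C v)) (ide2 C (cmp C u f)))"
proof -
  note [simp] = H[unfolded hom_def c2_def]
  have kh: "ide2 C (cmp C k h1) = hcmp C (ide2 C k) (ide2 C h1)" by simp
  have a1: "hcmp C (ide2 C k) (hcmp C (ide2 C h1) cymM) = hcmp C (ide2 C (cmp C k h1)) cymM"
    unfolding kh by (simp add: hcmp_assoc del: hcmp_ide2)
  have a2: "hcmp C (ide2 C k) (hcmp C (ide2 C h1) (hcmp C \<beta> (ide2 C f))) = hcmp C (ide2 C (cmp C k h1)) (hcmp C \<beta> (ide2 C f))"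
    unfolding kh by (simp add: hcmp_assoc del: hcmp_ide2)
  have L: "vcmp C cy12 (hcmp C (ide2 C k) (vcmp C cyMz1 (vcmp C (hcmp C (ide2 C h1) cymM) (hcmp C (ide2 C h1) (hcmp C \<beta> (ide2 C f))))))
     = vcmp C (vcmp C cy12 (hcmp C (ide2 C k) cyMz1)) (vcmp C (hcmp C (ide2 C (cmp C k h1)) cymM) (hcmp C (ide2 C (cmp C k h1)) (hcmp C \<beta> (ide2 C f))))"
    by (simp add: W1 vcmp_assoc a1 a2 del: hcmp_ide2)
  have vuf: "ide2 C (cmp C v (cmp C u f)) = hcmp C (ide2 C v) (ide2 C (cmp C u f))" by simp
  have r0: "hcmp C (hcmp C cM12 (ide2 C v)) (ide2 C (cmp C u f)) = hcmp C cM12 (ide2 C (cmp C v (cmp C u f)))"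
    unfolding vuf by (simp add: hcmp_assoc del: hcmp_ide2)
  have r1: "vcmp C (hcmp C (ide2 C h2) (hcmp C \<beta> (ide2 C f))) (hcmp C cM12 (ide2 C (cmp C v (cmp C u f))))
       = vcmp C (hcmp C cM12 (ide2 C (cmp C e f))) (hcmp C (ide2 C (cmp C k h1)) (hcmp C \<beta> (ide2 C f)))"
  proof -
    have "vcmp C (hcmp C (ide2 C h2) (hcmp C \<beta> (ide2 C f))) (hcmp C cM12 (ide2 C (cmp C v (cmp C u f)))) = hcmp C cM12 (hcmp C \<beta> (ide2 C f))"
      using X2[of "hcmp C \<beta> (ide2 C f)" cM12] by simp
    also have "\<dots> = vcmp C (hcmp C cM12 (ide2 C (cmp C e f))) (hcmp C (ide2 C (cmp C k h1)) (hcmp C \<beta> (ide2 C f)))"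
      using X1[of "hcmp C \<beta> (ide2 C f)" cM12] by simp
    finally show ?thesis .
  qed
  have r2: "vcmp C (hcmp C (ide2 C h2) cymM) (hcmp C cM12 (ide2 C (cmp C e f)))
       = vcmp C (hcmp C cM12 (ide2 C fM)) (hcmp C (ide2 C (cmp C k h1)) cymM)"
  proof -
    have "vcmp C (hcmp C (ide2 C h2) cymM) (hcmp C cM12 (ide2 C (cmp C e f))) = hcmp C cM12 cymM"
      using X2[of cymM cM12] by simp
    also have "\<dots> = vcmp C (hcmp C cM12 (ide2 C fM)) (hcmp C (ide2 C (cmp C k h1)) cymM)"
      using X1[of cymM cM12] by simp
    finally show ?thesis .
  qed
  have "vcmp C (vcmp C cyMz2 (vcmp C (hcmp C (ide2 C h2) cymM) (hcmp C (ide2 C h2) (hcmp C \<beta> (ide2 C f)))))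
          (hcmp C (hcmp C cM12 (ide2 C v)) (ide2 C (cmp C u f)))
     = vcmp C cyMz2 (vcmp C (vcmp C (hcmp C (ide2 C h2) cymM) (hcmp C cM12 (ide2 C (cmp C e f))))
          (hcmp C (ide2 C (cmp C k h1)) (hcmp C \<beta> (ide2 C f))))"
    unfolding r0 using r1 by (simp add: vcmp_assoc)
  also have "\<dots> = vcmp C (vcmp C cyMz2 (hcmp C cM12 (ide2 C fM))) (vcmp C (hcmp C (ide2 C (cmp C k h1)) cymM) (hcmp C (ide2 C (cmp C k h1)) (hcmp C \<beta> (ide2 C f))))"
    unfolding r2 by (simp add: vcmp_assoc)
  finally show ?thesis using L E by simp
qed

end


context TOC begin

definition cocyc :: "'i \<Rightarrow> 'i \<Rightarrow> 'i \<Rightarrow> 'i \<Rightarrow> ('i \<Rightarrow> 'i \<Rightarrow> 'm) \<Rightarrow> ('i \<Rightarrow> 'i \<Rightarrow> 'i \<Rightarrow> 'c) \<Rightarrow> bool" where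
  "cocyc a b c d F1 F2 \<longleftrightarrow> vcmp C (F2 a c d) (hcmp C (ide2 C (F1 c d)) (F2 a b c)) =
        vcmp C (F2 a b d) (hcmp C (F2 b c d) (ide2 C (F1 a b)))"

lemma iso_cel: "iso2 C a \<Longrightarrow> a \<in> cel C" unfolding iso2_def by blast

lemma su_split: "su_pseudofunctor C I le F0 F1 F2 \<longleftrightarrow>
   (\<forall>a\<in>I. F0 a \<in> obj C) \<and>
   (\<forall>a\<in>I. \<forall>b\<in>I. le a b \<longrightarrow> hom (F1 a b) (F0 a) (F0 b)) \<and>
   (\<forall>a\<in>I. F1 a a = ide C (F0 a)) \<and>
   (\<forall>a\<in>I. \<forall>b\<in>I. \<forall>c\<in>I. le a b \<and> le b c \<longrightarrow> c2 (F2 a b c) (cmp C (F1 b c) (F1 a b)) (F1 a c)) \<and>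
   (\<forall>a\<in>I. \<forall>b\<in>I. le a b \<longrightarrow> F2 a a b = ide2 C (F1 a b) \<and> F2 a b b = ide2 C (F1 a b)) \<and>
   (\<forall>a\<in>I. \<forall>b\<in>I. \<forall>c\<in>I. \<forall>d\<in>I. le a b \<and> le b c \<and> le c d \<longrightarrow> cocyc a b c d F1 F2)"
  unfolding su_pseudofunctor_def hom_def c2_def cocyc_def
  by (auto simp: cel_iso intro: iso_cel)

lemma cocyc_degen:
  assumes "hom (F1 a b) A B" "hom (F1 b c) B Cc" "hom (F1 c d) Cc D" "hom (F1 a c) A Cc" "hom (F1 b d) B D" "hom (F1 a d) A D"
   "c2 (F2 a b c) (cmp C (F1 b c) (F1 a b)) (F1 a c)" "c2 (F2 a b d) (cmp C (F1 b d) (F1 a b)) (F1 a d)"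
   "c2 (F2 a c d) (cmp C (F1 c d) (F1 a c)) (F1 a d)" "c2 (F2 b c d) (cmp C (F1 c d) (F1 b c)) (F1 b d)"
   "F1 a a = ide C A" "F1 c c = ide C Cc"
   "F2 a a c = ide2 C (F1 a c)" "F2 a a d = ide2 C (F1 a d)" "F2 a b b = ide2 C (F1 a b)" "F2 b b d = ide2 C (F1 b d)"
   "F2 a c c = ide2 C (F1 a c)" "F2 b c c = ide2 C (F1 b c)"
   "a = b \<or> b = c \<or> c = d"
  shows "cocyc a b c d F1 F2"
  using assms unfolding cocyc_def hom_def c2_def
  by (elim disjE) auto


definition F1x :: "('i \<Rightarrow> 'i \<Rightarrow> 'm) \<Rightarrow> 'i \<Rightarrow> 'i \<Rightarrow> 'i \<Rightarrow> 'm \<Rightarrow> 'm \<Rightarrow> 'o \<Rightarrow> 'i \<Rightarrow> 'i \<Rightarrow> 'm" where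
  "F1x F1 x m M u v X a b = (if a = x \<and> b = x then ide C X else if b = x then cmp C u (F1 a m)
     else if a = x then cmp C (F1 M b) v else F1 a b)"

definition Phi :: "('i \<Rightarrow> 'i \<Rightarrow> 'm) \<Rightarrow> ('i \<Rightarrow> 'i \<Rightarrow> 'i \<Rightarrow> 'c) \<Rightarrow> 'i \<Rightarrow> 'i \<Rightarrow> 'c \<Rightarrow> 'i \<Rightarrow> 'i \<Rightarrow> 'c" where
  "Phi F1 F2 m M \<beta> a c = vcmp C (F2 a M c) (vcmp C (hcmp C (ide2 C (F1 M c)) (F2 a m M))
       (hcmp C (ide2 C (F1 M c)) (hcmp C \<beta> (ide2 C (F1 a m)))))"

definition F2x :: "('i \<Rightarrow> 'i \<Rightarrow> 'm) \<Rightarrow> ('i \<Rightarrow> 'i \<Rightarrow> 'i \<Rightarrow> 'c) \<Rightarrow> 'i \<Rightarrow> 'i \<Rightarrow> 'i \<Rightarrow> 'm \<Rightarrow> 'm \<Rightarrow> 'c \<Rightarrow> 'o \<Rightarrow> 'i \<Rightarrow> 'i \<Rightarrow> 'i \<Rightarrow> 'c" where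
  "F2x F1 F2 x m M u v \<beta> X a b c = (if c = x then (if b = x then ide2 C (F1x F1 x m M u v X a x) else hcmp C (ide2 C u) (F2 a b m))
     else if b = x then (if a = x then ide2 C (F1x F1 x m M u v X x c) else Phi F1 F2 m M \<beta> a c)
     else if a = x then hcmp C (F2 M b c) (ide2 C v) else F2 a b c)"

lemma insert_point:
  assumes PF: "su_pseudofunctor C P le F0 F1 F2"
  and tr: "\<And>a b c. le a b \<Longrightarrow> le b c \<Longrightarrow> le a c" and rf: "\<And>a. le a a"
  and asy: "\<And>a b. le a b \<Longrightarrow> le b a \<Longrightarrow> a = b"
  and xP: "x \<notin> P" and mP: "m \<in> P" and MP: "M \<in> P" and mM: "le m M"
  and dn: "\<And>y. y \<in> P \<Longrightarrow> le y x \<longleftrightarrow> le y m" and up: "\<And>z. z \<in> P \<Longrightarrow> le x z \<longleftrightarrow> le M z"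
  and hu: "hom u (F0 m) X" and hv: "hom v X (F0 M)" and hb: "c2 \<beta> (cmp C v u) (F1 m M)"
  shows "su_pseudofunctor C (insert x P) le (F0(x:=X)) (F1x F1 x m M u v X) (F2x F1 F2 x m M u v \<beta> X)"
proof -
  have P0: "\<And>a. a \<in> P \<Longrightarrow> F0 a \<in> obj C"
   and P1: "\<And>a b. a \<in> P \<Longrightarrow> b \<in> P \<Longrightarrow> le a b \<Longrightarrow> hom (F1 a b) (F0 a) (F0 b)"
   and P2: "\<And>a. a \<in> P \<Longrightarrow> F1 a a = ide C (F0 a)"
   and P3: "\<And>a b c. a \<in> P \<Longrightarrow> b \<in> P \<Longrightarrow> c \<in> P \<Longrightarrow> le a b \<Longrightarrow> le b c \<Longrightarrow> c2 (F2 a b c) (cmp C (F1 b c) (F1 a b)) (F1 a c)"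
   and P4: "\<And>a b. a \<in> P \<Longrightarrow> b \<in> P \<Longrightarrow> le a b \<Longrightarrow> F2 a a b = ide2 C (F1 a b)"
   and P4': "\<And>a b. a \<in> P \<Longrightarrow> b \<in> P \<Longrightarrow> le a b \<Longrightarrow> F2 a b b = ide2 C (F1 a b)"
   and P5: "\<And>a b c d. a \<in> P \<Longrightarrow> b \<in> P \<Longrightarrow> c \<in> P \<Longrightarrow> d \<in> P \<Longrightarrow> le a b \<Longrightarrow> le b c \<Longrightarrow> le c d \<Longrightarrow> cocyc a b c d F1 F2"
    using PF unfolding su_split by blast+
  define G0 where "G0 = F0(x:=X)"
  define G1 where "G1 = F1x F1 x m M u v X"
  define G2 where "G2 = F2x F1 F2 x m M u v \<beta> X"
  have xm: "x \<noteq> m" "x \<noteq> M" using xP mP MP by auto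
  have XO: "X \<in> obj C" using hu unfolding hom_def by auto
  have G0x: "G0 x = X" and G0P: "\<And>a. a \<in> P \<Longrightarrow> G0 a = F0 a" using xP unfolding G0_def by auto
  have G1xx: "G1 x x = ide C X"
   and G1ax: "\<And>a. a \<noteq> x \<Longrightarrow> G1 a x = cmp C u (F1 a m)"
   and G1xb: "\<And>b. b \<noteq> x \<Longrightarrow> G1 x b = cmp C (F1 M b) v"
   and G1ab: "\<And>a b. a \<noteq> x \<Longrightarrow> b \<noteq> x \<Longrightarrow> G1 a b = F1 a b"
    unfolding G1_def F1x_def by auto
  have G2xxx: "G2 x x x = ide2 C (ide C X)"
   and G2axx: "\<And>a. a \<noteq> x \<Longrightarrow> G2 a x x = ide2 C (cmp C u (F1 a m))"
   and G2abx: "\<And>a b. b \<noteq> x \<Longrightarrow> G2 a b x = hcmp C (ide2 C u) (F2 a b m)"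
   and G2xxc: "\<And>c. c \<noteq> x \<Longrightarrow> G2 x x c = ide2 C (cmp C (F1 M c) v)"
   and G2axc: "\<And>a c. a \<noteq> x \<Longrightarrow> c \<noteq> x \<Longrightarrow> G2 a x c = Phi F1 F2 m M \<beta> a c"
   and G2xbc: "\<And>b c. b \<noteq> x \<Longrightarrow> c \<noteq> x \<Longrightarrow> G2 x b c = hcmp C (F2 M b c) (ide2 C v)"
   and G2abc: "\<And>a b c. a \<noteq> x \<Longrightarrow> b \<noteq> x \<Longrightarrow> c \<noteq> x \<Longrightarrow> G2 a b c = F2 a b c"
    unfolding G2_def F2x_def F1x_def by auto
  note hu' = hu[unfolded hom_def] and hv' = hv[unfolded hom_def] and hb' = hb[unfolded c2_def]
  have Q0: "\<forall>a\<in>insert x P. G0 a \<in> obj C" using P0 XO G0x G0P by auto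
  have Q1: "\<forall>a\<in>insert x P. \<forall>b\<in>insert x P. le a b \<longrightarrow> hom (G1 a b) (G0 a) (G0 b)"
  proof (intro ballI impI)
    fix a b assume a: "a \<in> insert x P" and b: "b \<in> insert x P" and ab: "le a b"
    show "hom (G1 a b) (G0 a) (G0 b)"
    proof (cases "a = x")
      case ax: True
      show ?thesis
      proof (cases "b = x")
        case True thus ?thesis using ax G1xx G0x XO unfolding hom_def by simp
      next
        case False
        hence bP: "b \<in> P" and Mb: "le M b" using b ab ax up by auto
        show ?thesis using P1[OF MP bP Mb] hv' ax False G1xb G0x G0P[OF bP] unfolding hom_def by simp
      qed
    next
      case False
      hence aP: "a \<in> P" using a by auto
      show ?thesis
      proof (cases "b = x")
        case True
        hence am: "le a m" using ab dn aP by auto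
        show ?thesis using P1[OF aP mP am] hu' True False G1ax G0x G0P[OF aP] unfolding hom_def by simp
      next
        case bx: False
        hence bP: "b \<in> P" using b by auto
        show ?thesis using P1[OF aP bP ab] G1ab[OF False bx] G0P aP bP unfolding hom_def by simp
      qed
    qed
  qed
  have Q2: "\<forall>a\<in>insert x P. G1 a a = ide C (G0 a)"
  proof
    fix a assume "a \<in> insert x P"
    then show "G1 a a = ide C (G0 a)"
    proof
      assume "a = x" thus ?thesis using G1xx G0x by simp
    next
      assume aP: "a \<in> P" hence "a \<noteq> x" using xP by auto
      thus ?thesis using G1ab P2[OF aP] G0P[OF aP] by simp
    qed
  qed
  have xle: "\<And>b. b \<in> P \<Longrightarrow> le x b \<Longrightarrow> le b x \<Longrightarrow> False" using asy xP by blast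
  have Q3: "\<forall>a\<in>insert x P. \<forall>b\<in>insert x P. \<forall>c\<in>insert x P. le a b \<and> le b c \<longrightarrow> c2 (G2 a b c) (cmp C (G1 b c) (G1 a b)) (G1 a c)"
  proof (intro ballI impI, elim conjE)
    fix a b c assume a: "a \<in> insert x P" and b: "b \<in> insert x P" and c: "c \<in> insert x P" and ab: "le a b" and bc: "le b c"
    show "c2 (G2 a b c) (cmp C (G1 b c) (G1 a b)) (G1 a c)"
    proof (cases "c = x")
      case cx: True
      show ?thesis
      proof (cases "b = x")
        case bx: True
        show ?thesis
        proof (cases "a = x")
          case True thus ?thesis using cx bx G2xxx G1xx XO unfolding c2_def by simp
        next
          case False
          hence aP: "a \<in> P" and am: "le a m" using a ab bx dn by auto
          show ?thesis using False cx bx G2axx G1xx G1ax P1[OF aP mP am] hu' XO unfolding c2_def hom_def by simp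
        qed
      next
        case bx: False
        hence bP: "b \<in> P" and bm: "le b m" using b bc cx dn by auto
        have ax: "a \<noteq> x" using xle[OF bP] ab bc cx by auto
        hence aP: "a \<in> P" using a by auto
        have am: "le a m" using tr[OF ab bm] .
        show ?thesis using P3[OF aP bP mP ab bm] P1[OF aP bP ab] P1[OF bP mP bm] P1[OF aP mP am] hu'
          cx bx ax G2abx G1ax G1ab unfolding c2_def hom_def by simp
      qed
    next
      case cx: False
      hence cP: "c \<in> P" using c by auto
      show ?thesis
      proof (cases "b = x")
        case bx: True
        hence Mc: "le M c" using bc up cP by auto
        show ?thesis
        proof (cases "a = x")
          case True thus ?thesis using cx bx G2xxc G1xx G1xb P1[OF MP cP Mc] hv' XO unfolding c2_def hom_def by simp
        next
          case False
          hence aP: "a \<in> P" and am: "le a m" using a ab bx dn by auto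
          have aM: "le a M" using tr[OF am mM] .
          show ?thesis using P3[OF aP MP cP aM Mc] P3[OF aP mP MP am mM] P1[OF aP mP am] P1[OF mP MP mM]
              P1[OF MP cP Mc] P1[OF aP MP aM] hu' hv' hb' cx bx False G2axc G1ax G1xb G1ab
            unfolding c2_def hom_def Phi_def by simp
        qed
      next
        case bx: False
        hence bP: "b \<in> P" using b by auto
        show ?thesis
        proof (cases "a = x")
          case True
          hence Mb: "le M b" using ab up bP by auto
          show ?thesis using P3[OF MP bP cP Mb bc] P1[OF MP bP Mb] P1[OF bP cP bc] P1[OF MP cP tr[OF Mb bc]] hv'
            True bx cx G2xbc G1xb G1ab unfolding c2_def hom_def by simp
        next
          case False
          hence aP: "a \<in> P" using a by auto
          show ?thesis using P3[OF aP bP cP ab bc] False bx cx G2abc G1ab by simp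
        qed
      qed
    qed
  qed
  have Q4: "\<forall>a\<in>insert x P. \<forall>b\<in>insert x P. le a b \<longrightarrow> G2 a a b = ide2 C (G1 a b) \<and> G2 a b b = ide2 C (G1 a b)"
  proof (intro ballI impI)
    fix a b assume a: "a \<in> insert x P" and b: "b \<in> insert x P" and ab: "le a b"
    show "G2 a a b = ide2 C (G1 a b) \<and> G2 a b b = ide2 C (G1 a b)"
    proof (cases "a = x")
      case ax: True
      show ?thesis
      proof (cases "b = x")
        case True thus ?thesis using ax G2xxx G1xx by simp
      next
        case False
        hence bP: "b \<in> P" and Mb: "le M b" using b ab ax up by auto
        show ?thesis using ax False G2xxc G2xbc G1xb P4'[OF MP bP Mb] P1[OF MP bP Mb] hv' unfolding hom_def by simp
      qed
    next
      case False
      hence aP: "a \<in> P" using a by auto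
      show ?thesis
      proof (cases "b = x")
        case True
        hence am: "le a m" using ab dn aP by auto
        show ?thesis using True False G2abx G2axx G1ax P4[OF aP mP am] P1[OF aP mP am] hu' unfolding hom_def by simp
      next
        case bx: False
        hence bP: "b \<in> P" using b by auto
        show ?thesis using False bx G2abc G1ab P4[OF aP bP ab] P4'[OF aP bP ab] by simp
      qed
    qed
  qed
  have Q1r: "\<And>a b. a \<in> insert x P \<Longrightarrow> b \<in> insert x P \<Longrightarrow> le a b \<Longrightarrow> hom (G1 a b) (G0 a) (G0 b)" using Q1 by blast
  have Q2r: "\<And>a. a \<in> insert x P \<Longrightarrow> G1 a a = ide C (G0 a)" using Q2 by blast
  have Q3r: "\<And>a b c. a \<in> insert x P \<Longrightarrow> b \<in> insert x P \<Longrightarrow> c \<in> insert x P \<Longrightarrow> le a b \<Longrightarrow> le b c \<Longrightarrow>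
     c2 (G2 a b c) (cmp C (G1 b c) (G1 a b)) (G1 a c)" using Q3 by blast
  have Q4r: "\<And>a b. a \<in> insert x P \<Longrightarrow> b \<in> insert x P \<Longrightarrow> le a b \<Longrightarrow> G2 a a b = ide2 C (G1 a b)"
   and Q4r': "\<And>a b. a \<in> insert x P \<Longrightarrow> b \<in> insert x P \<Longrightarrow> le a b \<Longrightarrow> G2 a b b = ide2 C (G1 a b)" using Q4 by blast+
  have Q5: "\<forall>a\<in>insert x P. \<forall>b\<in>insert x P. \<forall>c\<in>insert x P. \<forall>d\<in>insert x P. le a b \<and> le b c \<and> le c d \<longrightarrow> cocyc a b c d G1 G2"
  proof (intro ballI impI, elim conjE)
    fix a b c d assume a: "a \<in> insert x P" and b: "b \<in> insert x P" and c: "c \<in> insert x P" and d: "d \<in> insert x P"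
      and ab: "le a b" and bc: "le b c" and cd: "le c d"
    have ac: "le a c" and bd: "le b d" and ad: "le a d" using tr ab bc cd by blast+
    show "cocyc a b c d G1 G2"
    proof (cases "a = b \<or> b = c \<or> c = d")
      case True
      show ?thesis
        by (rule cocyc_degen[OF Q1r[OF a b ab] Q1r[OF b c bc] Q1r[OF c d cd] Q1r[OF a c ac] Q1r[OF b d bd] Q1r[OF a d ad]
          Q3r[OF a b c ab bc] Q3r[OF a b d ab bd] Q3r[OF a c d ac cd] Q3r[OF b c d bc cd] Q2r[OF a] Q2r[OF c]
          Q4r[OF a c ac] Q4r[OF a d ad] Q4r'[OF a b ab] Q4r[OF b d bd] Q4r'[OF a c ac] Q4r'[OF b c bc] True])
    next
      case False
      hence ne: "a \<noteq> b" "b \<noteq> c" "c \<noteq> d" by auto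
      have ne2: "a \<noteq> c" "b \<noteq> d" "a \<noteq> d" using ne asy tr ab bc cd by blast+
      show ?thesis
      proof (cases "d = x")
        case dx: True
        hence nx: "a \<noteq> x" "b \<noteq> x" "c \<noteq> x" using ne ne2 by auto
        hence aP: "a \<in> P" and bP: "b \<in> P" and cP: "c \<in> P" using a b c by auto
        have cm: "le c m" using cd dx dn cP by auto
        have bm: "le b m" and am: "le a m" using tr bc ac cm by blast+
        have "vcmp C (hcmp C (ide2 C u) (F2 a c m)) (hcmp C (ide2 C (cmp C u (F1 c m))) (F2 a b c)) =
              vcmp C (hcmp C (ide2 C u) (F2 a b m)) (hcmp C (hcmp C (ide2 C u) (F2 b c m)) (ide2 C (F1 a b)))"
          by (rule case1[OF P1[OF aP bP ab] P1[OF bP cP bc] P1[OF aP cP ac] P1[OF cP mP cm] P1[OF bP mP bm] P1[OF aP mP am] hu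
             P3[OF aP bP cP ab bc] P3[OF aP cP mP ac cm] P3[OF aP bP mP ab bm] P3[OF bP cP mP bc cm]
             P5[OF aP bP cP mP ab bc cm, unfolded cocyc_def]])
        thus ?thesis unfolding cocyc_def using dx nx G2abx G1ax G2abc G1ab by simp
      next
        case dx: False
        hence dP: "d \<in> P" using d by auto
        show ?thesis
        proof (cases "c = x")
          case cx: True
          hence nx: "a \<noteq> x" "b \<noteq> x" using ne ne2 by auto
          hence aP: "a \<in> P" and bP: "b \<in> P" using a b by auto
          have Md: "le M d" using cd cx up dP by auto
          have bm: "le b m" using bc cx dn bP by auto
          have am: "le a m" and aM: "le a M" and bM: "le b M" using tr ab bm mM by blast+
          have "vcmp C (Phi F1 F2 m M \<beta> a d) (hcmp C (ide2 C (cmp C (F1 M d) v)) (hcmp C (ide2 C u) (F2 a b m))) =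
                vcmp C (F2 a b d) (hcmp C (Phi F1 F2 m M \<beta> b d) (ide2 C (F1 a b)))"
            unfolding Phi_def
            by (rule case2[OF P1[OF aP bP ab] P1[OF bP mP bm] P1[OF aP mP am] P1[OF mP MP mM] hu hv P1[OF MP dP Md]
               P1[OF aP MP aM] P1[OF bP MP bM] P1[OF aP dP ad] P1[OF bP dP bd] hb
               P3[OF aP bP mP ab bm] P3[OF aP mP MP am mM] P3[OF bP mP MP bm mM] P3[OF aP bP MP ab bM]
               P3[OF aP MP dP aM Md] P3[OF bP MP dP bM Md] P3[OF aP bP dP ab bd]
               P5[OF aP bP mP MP ab bm mM, unfolded cocyc_def] P5[OF aP bP MP dP ab bM Md, unfolded cocyc_def]])
          thus ?thesis unfolding cocyc_def using dx cx nx G2axc G1xb G2abx G2abc G1ab by simp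
        next
          case cx: False
          hence cP: "c \<in> P" using c by auto
          show ?thesis
          proof (cases "b = x")
            case bx: True
            hence nx: "a \<noteq> x" using ne by auto
            hence aP: "a \<in> P" using a by auto
            have Mc: "le M c" using bc bx up cP by auto
            have am: "le a m" using ab bx dn aP by auto
            have aM: "le a M" and Md: "le M d" using tr am mM Mc cd by blast+
            have "vcmp C (F2 a c d) (hcmp C (ide2 C (F1 c d)) (Phi F1 F2 m M \<beta> a c)) =
                  vcmp C (Phi F1 F2 m M \<beta> a d) (hcmp C (hcmp C (F2 M c d) (ide2 C v)) (ide2 C (cmp C u (F1 a m))))"
              unfolding Phi_def
              by (rule case3[OF P1[OF aP mP am] P1[OF mP MP mM] hu hv P1[OF MP cP Mc] P1[OF MP dP Md] P1[OF cP dP cd]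
                 P1[OF aP MP aM] P1[OF aP cP ac] P1[OF aP dP ad] hb
                 P3[OF aP mP MP am mM] P3[OF aP MP cP aM Mc] P3[OF aP MP dP aM Md] P3[OF MP cP dP Mc cd] P3[OF aP cP dP ac cd]
                 P5[OF aP MP cP dP aM Mc cd, unfolded cocyc_def]])
            thus ?thesis unfolding cocyc_def using dx cx bx nx G2axc G2xbc G1ax G2abc G1ab by simp
          next
            case bx: False
            hence bP: "b \<in> P" using b by auto
            show ?thesis
            proof (cases "a = x")
              case ax: True
              have Mb: "le M b" using ab ax up bP by auto
              have Mc: "le M c" and Md: "le M d" using tr Mb bc bd by blast+
              have "vcmp C (hcmp C (F2 M c d) (ide2 C v)) (hcmp C (ide2 C (F1 c d)) (hcmp C (F2 M b c) (ide2 C v))) =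
                    vcmp C (hcmp C (F2 M b d) (ide2 C v)) (hcmp C (F2 b c d) (ide2 C (cmp C (F1 M b) v)))"
                by (rule case4[OF P1[OF MP bP Mb] P1[OF bP cP bc] P1[OF cP dP cd] P1[OF bP dP bd] P1[OF MP cP Mc] P1[OF MP dP Md] hv
                   P3[OF bP cP dP bc cd] P3[OF MP bP cP Mb bc] P3[OF MP cP dP Mc cd] P3[OF MP bP dP Mb bd]
                   P5[OF MP bP cP dP Mb bc cd, unfolded cocyc_def]])
              thus ?thesis unfolding cocyc_def using dx cx bx ax G2xbc G1xb G2abc G1ab by simp
            next
              case ax: False
              hence aP: "a \<in> P" using a by auto
              show ?thesis using P5[OF aP bP cP dP ab bc cd] unfolding cocyc_def using ax bx cx dx G2abc G1ab by simp
            qed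
          qed
        qed
      qed
    qed
  qed
  show ?thesis unfolding su_split using Q0 Q1 Q2 Q3 Q4 Q5 unfolding G0_def G1_def G2_def by blast
qed

end


lemma Delta_le_simp[simp]: "Delta_le (a, b) (c, d) \<longleftrightarrow> a \<le> c \<and> b \<le> d"
  unfolding Delta_le_def by simp
lemma Dle_trans: "Delta_le p q \<Longrightarrow> Delta_le q r \<Longrightarrow> Delta_le p r"
  by (cases p; cases q; cases r) auto
lemma Dle_refl: "Delta_le p p" by (cases p) auto
lemma Dle_asym: "Delta_le p q \<Longrightarrow> Delta_le q p \<Longrightarrow> p = q"
  by (cases p; cases q) auto

context TOC begin

definition Inv where
  "Inv A B n s0 s1 s2 P F0 F1 F2 \<longleftrightarrow> su_pseudofunctor C P Delta_le F0 F1 F2 \<and>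
     (\<forall>l\<le>n. F0 (l, l) = s0 l) \<and>
     (\<forall>l l'. l \<le> l' \<and> l' \<le> n \<longrightarrow> F1 (l, l) (l', l') = s1 l l') \<and>
     (\<forall>l l' l''. l \<le> l' \<and> l' \<le> l'' \<and> l'' \<le> n \<longrightarrow> F2 (l, l) (l', l') (l'', l'') = s2 l l' l'') \<and>
     (\<forall>k k' l. (k, l) \<in> P \<and> (k', l) \<in> P \<and> k \<le> k' \<longrightarrow> F1 (k, l) (k', l) \<in> A) \<and>
     (\<forall>k l l'. (k, l) \<in> P \<and> (k, l') \<in> P \<and> l \<le> l' \<longrightarrow> F1 (k, l) (k, l') \<in> B)"

lemma step:
  assumes I: "Inv A B n s0 s1 s2 P F0 F1 F2"
  and AA: "arrowy_sub C A" and BB: "arrowy_sub C B"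
  and fact: "\<forall>f\<in>arr C. \<exists>i\<in>A. \<exists>p\<in>B. \<exists>\<alpha>\<in>cel C.
           src C i = src C f \<and> trg C i = src C p \<and> trg C p = trg C f \<and>
           src2 C \<alpha> = cmp C p i \<and> trg2 C \<alpha> = f"
  and xP: "(k, l) \<notin> P" and lk: "l < k"
  and mP: "(k - 1, l) \<in> P" and MP: "(k, Suc l) \<in> P"
  and dn: "\<And>y. y \<in> P \<Longrightarrow> Delta_le y (k, l) \<longleftrightarrow> Delta_le y (k - 1, l)"
  and up: "\<And>z. z \<in> P \<Longrightarrow> Delta_le (k, l) z \<longleftrightarrow> Delta_le (k, Suc l) z"
  shows "\<exists>G0 G1 G2. Inv A B n s0 s1 s2 (insert (k, l) P) G0 G1 G2"
proof -
  let ?x = "(k, l)" and ?m = "(k - 1, l)" and ?M = "(k, Suc l)"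
  have PF: "su_pseudofunctor C P Delta_le F0 F1 F2" using I unfolding Inv_def by blast
  have mM: "Delta_le ?m ?M" by simp
  have P1: "\<And>a b. a \<in> P \<Longrightarrow> b \<in> P \<Longrightarrow> Delta_le a b \<Longrightarrow> hom (F1 a b) (F0 a) (F0 b)"
    using PF unfolding su_split by blast
  have hmM: "hom (F1 ?m ?M) (F0 ?m) (F0 ?M)" using P1[OF mP MP mM] .
  hence "F1 ?m ?M \<in> arr C" unfolding hom_def by blast
  then obtain i p \<alpha> where i: "i \<in> A" and p: "p \<in> B" and al: "\<alpha> \<in> cel C"
    and e: "src C i = src C (F1 ?m ?M)" "trg C i = src C p" "trg C p = trg C (F1 ?m ?M)"
       "src2 C \<alpha> = cmp C p i" "trg2 C \<alpha> = F1 ?m ?M"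
    using fact by blast
  have iarr: "i \<in> arr C" and parr: "p \<in> arr C" using i p AA BB unfolding arrowy_sub_def by auto
  have hu: "hom i (F0 ?m) (trg C i)" using iarr e hmM unfolding hom_def by auto
  have hv: "hom p (trg C i) (F0 ?M)" using parr e hmM unfolding hom_def by auto
  have hb: "c2 \<alpha> (cmp C p i) (F1 ?m ?M)" using al e unfolding c2_def by auto
  define G0 where "G0 = F0(?x := trg C i)"
  define G1 where "G1 = F1x F1 ?x ?m ?M i p (trg C i)"
  define G2 where "G2 = F2x F1 F2 ?x ?m ?M i p \<alpha> (trg C i)"
  have PF': "su_pseudofunctor C (insert ?x P) Delta_le G0 G1 G2"
    unfolding G0_def G1_def G2_def
    by (rule insert_point[OF PF Dle_trans Dle_refl Dle_asym xP mP MP mM dn up hu hv hb])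
  have G1o: "\<And>a b. a \<noteq> ?x \<Longrightarrow> b \<noteq> ?x \<Longrightarrow> G1 a b = F1 a b" unfolding G1_def F1x_def by auto
  have G1ax: "\<And>a. a \<noteq> ?x \<Longrightarrow> G1 a ?x = cmp C i (F1 a ?m)" unfolding G1_def F1x_def by auto
  have G1xb: "\<And>b. b \<noteq> ?x \<Longrightarrow> G1 ?x b = cmp C (F1 ?M b) p" unfolding G1_def F1x_def by auto
  have G1xx: "G1 ?x ?x = ide C (trg C i)" unfolding G1_def F1x_def by auto
  have G2o: "\<And>a b c. a \<noteq> ?x \<Longrightarrow> b \<noteq> ?x \<Longrightarrow> c \<noteq> ?x \<Longrightarrow> G2 a b c = F2 a b c" unfolding G2_def F2x_def by auto
  have ndiag: "\<And>j. (j, j) \<noteq> ?x" using lk by auto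
  have Xo: "trg C i \<in> obj C" using iarr by simp
  have IA: "\<forall>k k' l. (k, l) \<in> P \<and> (k', l) \<in> P \<and> k \<le> k' \<longrightarrow> F1 (k, l) (k', l) \<in> A"
   and IB: "\<forall>k l l'. (k, l) \<in> P \<and> (k, l') \<in> P \<and> l \<le> l' \<longrightarrow> F1 (k, l) (k, l') \<in> B"
    using I unfolding Inv_def by blast+
  have hA: "\<forall>a a' b. (a, b) \<in> insert ?x P \<and> (a', b) \<in> insert ?x P \<and> a \<le> a' \<longrightarrow> G1 (a, b) (a', b) \<in> A"
  proof (intro allI impI, elim conjE)
    fix a a' b assume y: "(a, b) \<in> insert ?x P" and z: "(a', b) \<in> insert ?x P" and aa: "a \<le> a'"
    show "G1 (a, b) (a', b) \<in> A"
    proof (cases "(a', b) = ?x")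
      case zx: True
      show ?thesis
      proof (cases "(a, b) = ?x")
        case True thus ?thesis using zx G1xx Xo AA unfolding arrowy_sub_def by simp
      next
        case False
        hence yP: "(a, b) \<in> P" using y by auto
        have ym: "Delta_le (a, b) ?m" using dn[OF yP] zx aa by auto
        have "F1 (a, b) ?m \<in> A" using IA yP mP ym zx by auto
        moreover have "hom (F1 (a, b) ?m) (F0 (a, b)) (F0 ?m)" using P1[OF yP mP ym] .
        ultimately show ?thesis using False zx G1ax i hu AA unfolding arrowy_sub_def hom_def by auto
      qed
    next
      case zx: False
      hence zP: "(a', b) \<in> P" using z by auto
      show ?thesis
      proof (cases "(a, b) = ?x")
        case True
        hence "Delta_le ?M (a', b)" using up[OF zP] aa by auto
        thus ?thesis using True by auto
      next
        case False
        hence "(a, b) \<in> P" using y by auto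
        thus ?thesis using IA zP aa G1o False zx by auto
      qed
    qed
  qed
  have hB: "\<forall>a b b'. (a, b) \<in> insert ?x P \<and> (a, b') \<in> insert ?x P \<and> b \<le> b' \<longrightarrow> G1 (a, b) (a, b') \<in> B"
  proof (intro allI impI, elim conjE)
    fix a b b' assume y: "(a, b) \<in> insert ?x P" and z: "(a, b') \<in> insert ?x P" and bb: "b \<le> b'"
    show "G1 (a, b) (a, b') \<in> B"
    proof (cases "(a, b) = ?x")
      case yx: True
      show ?thesis
      proof (cases "(a, b') = ?x")
        case True thus ?thesis using yx G1xx Xo BB unfolding arrowy_sub_def by simp
      next
        case False
        hence zP: "(a, b') \<in> P" using z by auto
        have Mz: "Delta_le ?M (a, b')" using up[OF zP] yx bb by auto
        have "F1 ?M (a, b') \<in> B" using IB zP MP Mz yx by auto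
        moreover have "hom (F1 ?M (a, b')) (F0 ?M) (F0 (a, b'))" using P1[OF MP zP Mz] .
        ultimately show ?thesis using False yx G1xb p hv BB unfolding arrowy_sub_def hom_def by auto
      qed
    next
      case yx: False
      hence yP: "(a, b) \<in> P" using y by auto
      show ?thesis
      proof (cases "(a, b') = ?x")
        case True
        hence "Delta_le (a, b) ?m" using dn[OF yP] bb by auto
        thus ?thesis using True lk by auto
      next
        case False
        thus ?thesis using IB yP z bb G1o yx by auto
      qed
    qed
  qed
  have "Inv A B n s0 s1 s2 (insert ?x P) G0 G1 G2"
    unfolding Inv_def
  proof (intro conjI)
    show "su_pseudofunctor C (insert ?x P) Delta_le G0 G1 G2" by (rule PF')
    show "\<forall>l\<le>n. G0 (l, l) = s0 l" using I ndiag unfolding Inv_def G0_def by auto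
    show "\<forall>l l'. l \<le> l' \<and> l' \<le> n \<longrightarrow> G1 (l, l) (l', l') = s1 l l'" using I ndiag G1o unfolding Inv_def by auto
    show "\<forall>l l' l''. l \<le> l' \<and> l' \<le> l'' \<and> l'' \<le> n \<longrightarrow> G2 (l, l) (l', l') (l'', l'') = s2 l l' l''"
      using I ndiag G2o unfolding Inv_def by auto
  qed (use hA hB in blast)+
  thus ?thesis by blast
qed


definition R :: "nat \<Rightarrow> nat \<Rightarrow> nat \<Rightarrow> (nat \<times> nat) set" where
  "R n k j = {(a, a) | a. a \<le> n} \<union> {(a, b) | a b. b < a \<and> a < k} \<union> {(k, b) | b. j \<le> b \<and> b < k}"

lemma base:
  assumes S: "simplex C n s0 s1 s2" and AA: "arrowy_sub C A" and BB: "arrowy_sub C B"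
  shows "Inv A B n s0 s1 s2 (R n 0 0) (\<lambda>p. s0 (snd p)) (\<lambda>p q. s1 (snd p) (snd q)) (\<lambda>p q r. s2 (snd p) (snd q) (snd r))"
proof -
  have R0: "R n 0 0 = {(a, a) | a. a \<le> n}" unfolding R_def by auto
  have SP: "su_pseudofunctor C {0..n} (\<le>) s0 s1 s2" using S unfolding simplex_def .
  have PF: "su_pseudofunctor C (R n 0 0) Delta_le (\<lambda>p. s0 (snd p)) (\<lambda>p q. s1 (snd p) (snd q)) (\<lambda>p q r. s2 (snd p) (snd q) (snd r))"
    using SP unfolding R0 su_pseudofunctor_def by auto
  have ob: "\<And>l. l \<le> n \<Longrightarrow> s0 l \<in> obj C" using SP unfolding su_pseudofunctor_def by auto
  have id: "\<And>l. l \<le> n \<Longrightarrow> s1 l l = ide C (s0 l)" using SP unfolding su_pseudofunctor_def by auto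
  show ?thesis unfolding Inv_def
  proof (intro conjI)
    show "\<forall>k k' l. (k, l) \<in> R n 0 0 \<and> (k', l) \<in> R n 0 0 \<and> k \<le> k' \<longrightarrow> s1 (snd (k, l)) (snd (k', l)) \<in> A"
      using ob id AA unfolding R0 arrowy_sub_def by auto
    show "\<forall>k l l'. (k, l) \<in> R n 0 0 \<and> (k, l') \<in> R n 0 0 \<and> l \<le> l' \<longrightarrow> s1 (snd (k, l)) (snd (k, l')) \<in> B"
      using ob id BB unfolding R0 arrowy_sub_def by auto
  qed (use PF in auto)
qed

lemma row:
  assumes I: "Inv A B n s0 s1 s2 (R n k k) F0 F1 F2" and kn: "k \<le> n"
  and AA: "arrowy_sub C A" and BB: "arrowy_sub C B"
  and fact: "\<forall>f\<in>arr C. \<exists>i\<in>A. \<exists>p\<in>B. \<exists>\<alpha>\<in>cel C.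
           src C i = src C f \<and> trg C i = src C p \<and> trg C p = trg C f \<and>
           src2 C \<alpha> = cmp C p i \<and> trg2 C \<alpha> = f"
  shows "i \<le> k \<Longrightarrow> \<exists>G0 G1 G2. Inv A B n s0 s1 s2 (R n k (k - i)) G0 G1 G2"
proof (induction i)
  case 0 thus ?case using I by auto
next
  case (Suc i)
  then obtain G0 G1 G2 where IG: "Inv A B n s0 s1 s2 (R n k (k - i)) G0 G1 G2" by auto
  define j where "j = k - Suc i"
  have jk: "j < k" and ki: "k - i = Suc j" using Suc.prems unfolding j_def by auto
  have eq: "R n k (k - Suc i) = insert (k, j) (R n k (k - i))" unfolding R_def ki j_def[symmetric] using jk kn by auto
  have "\<exists>H0 H1 H2. Inv A B n s0 s1 s2 (insert (k, j) (R n k (k - i))) H0 H1 H2"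
  proof (rule step[OF IG AA BB fact])
    show "(k, j) \<notin> R n k (k - i)" unfolding R_def ki using jk by auto
    show "j < k" by (rule jk)
    show "(k - 1, j) \<in> R n k (k - i)" unfolding R_def ki using jk kn by (cases "j = k - 1") auto
    show "(k, Suc j) \<in> R n k (k - i)" unfolding R_def ki using jk kn by (cases "Suc j = k") auto
    show "\<And>y. y \<in> R n k (k - i) \<Longrightarrow> Delta_le y (k, j) = Delta_le y (k - 1, j)"
      unfolding R_def ki using jk by auto
    show "\<And>z. z \<in> R n k (k - i) \<Longrightarrow> Delta_le (k, j) z = Delta_le (k, Suc j) z"
      unfolding R_def ki using jk by auto
  qed
  thus ?case unfolding eq .
qed

lemma all_rows:
  assumes S: "simplex C n s0 s1 s2" and AA: "arrowy_sub C A" and BB: "arrowy_sub C B"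
  and fact: "\<forall>f\<in>arr C. \<exists>i\<in>A. \<exists>p\<in>B. \<exists>\<alpha>\<in>cel C.
           src C i = src C f \<and> trg C i = src C p \<and> trg C p = trg C f \<and>
           src2 C \<alpha> = cmp C p i \<and> trg2 C \<alpha> = f"
  shows "k \<le> n \<Longrightarrow> \<exists>G0 G1 G2. Inv A B n s0 s1 s2 (R n k 0) G0 G1 G2"
proof (induction k)
  case 0 thus ?case using base[OF S AA BB] by blast
next
  case (Suc k)
  then obtain G0 G1 G2 where IG: "Inv A B n s0 s1 s2 (R n k 0) G0 G1 G2" by auto
  have eq: "R n (Suc k) (Suc k) = R n k 0" unfolding R_def by auto
  have "\<exists>G0 G1 G2. Inv A B n s0 s1 s2 (R n (Suc k) (Suc k - Suc k)) G0 G1 G2"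
    by (rule row[OF IG[folded eq] Suc.prems AA BB fact]) simp
  thus ?case by simp
qed

end

theorem mainTheorem6:
  fixes C :: "('o, 'm, 'c) twocat" and A B :: "'m set"
  assumes "two_one_category C"
    and "arrowy_sub C A" and "arrowy_sub C B"
    and "\<forall>f\<in>arr C. \<exists>i\<in>A. \<exists>p\<in>B. \<exists>\<alpha>\<in>cel C.
           src C i = src C f \<and> trg C i = src C p \<and> trg C p = trg C f \<and>
           src2 C \<alpha> = cmp C p i \<and> trg2 C \<alpha> = f"
  shows "\<forall>n s0 s1 s2. simplex C n s0 s1 s2 \<longrightarrow> Comp C A B n s0 s1 s2 \<noteq> {}"
proof (intro allI impI)
  fix n s0 s1 s2 assume S: "simplex C n s0 s1 s2"
  interpret TOC C using assms(1) by unfold_locales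
  obtain G0 G1 G2 where IG: "Inv A B n s0 s1 s2 (R n n 0) G0 G1 G2"
    using all_rows[OF S assms(2,3,4)] by blast
  have eq: "R n n 0 = Delta n" unfolding R_def Delta_def by auto
  have "(G0, G1, G2) \<in> Comp C A B n s0 s1 s2"
    using IG unfolding eq Inv_def Comp_def Delta_def by auto
  thus "Comp C A B n s0 s1 s2 \<noteq> {}" by blast
qed

end
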